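(* Let $G$ be a finite simple graph with maximum degree $\Delta$. For every edge $e=uv$ of $G$, $$|F(e)|\le \Delta^2-1-\tfrac12|C_e^{\Delta}|-|T_1(e)|-\tfrac12|T_2(e)|-\tfrac12|T_6(e)|.$$ Moreover, if equality holds, then every vertex in $N(u)\cup N(v)$ has degree $\Delta$.
   Context: $N(w)$ is the open neighborhood of a vertex $w$. Two distinct edges $e,f$ are $1$-neighbors if they share an endvertex, and $2$-neighbors if they share no endvertex but some edge of $G$ shares an endvertex with each of them. $N(e)$ is the set of $1$-neighbors of $e$. $C_e^{\Delta}$ denotes the set of $1$-neighbors of $e$ that lie on a common $3$-cycle with $e$. For a $2$-neighbor $f=xy$ of $e=uv$, let $c(e,f)$ be the number of edges of $G$ joining a vertex of $\{u,v\}$ to a vertex of $\{x,y\}$ (so $1\le c(e,f)\le 4$). The type of $f$ (relative to $e$) is: Type 1 if $c(e,f)=4$; Type 2 if $c(e,f)=3$; Type 3 if $c(e,f)=2$ and some vertex of $f$ is adjacent to both $u$ and $v$; Type 4 if $c(e,f)=2$ and the two joining edges form a matching; Type 5 if $c(e,f)=2$ and some vertex of $e$ is adjacent to both $x$ and $y$; Type 6 if $c(e,f)=1$. $T_i(e)$ is the set of $2$-neighbors of $e$ of Type $i$. $F(e)=N(e)\cup T_1(e)\cup T_2(e)\cup T_3(e)\cup T_4(e)\cup T_5(e)$. *)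

theory Defs
  imports Complex_Main
begin

definition simple_graph :: "'a set \<Rightarrow> ('a \<Rightarrow> 'a \<Rightarrow> bool) \<Rightarrow> bool" where
  "simple_graph V E \<longleftrightarrow> finite V \<and> (\<forall>x y. E x y \<longrightarrow> x \<in> V \<and> y \<in> V)
     \<and> (\<forall>x y. E x y \<longrightarrow> E y x) \<and> (\<forall>x. \<not> E x x)"

definition edges :: "('a \<Rightarrow> 'a \<Rightarrow> bool) \<Rightarrow> 'a set set" where
  "edges E = {{x, y} | x y. E x y}"

definition nbhd :: "('a \<Rightarrow> 'a \<Rightarrow> bool) \<Rightarrow> 'a \<Rightarrow> 'a set" where
  "nbhd E w = {z. E w z}"

definition degree :: "('a \<Rightarrow> 'a \<Rightarrow> bool) \<Rightarrow> 'a \<Rightarrow> nat" where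
  "degree E w = card (nbhd E w)"

definition max_degree :: "'a set \<Rightarrow> ('a \<Rightarrow> 'a \<Rightarrow> bool) \<Rightarrow> nat" where
  "max_degree V E = Max (degree E ` V)"

definition one_nbrs :: "('a \<Rightarrow> 'a \<Rightarrow> bool) \<Rightarrow> 'a set \<Rightarrow> 'a set set" where
  "one_nbrs E e = {f \<in> edges E. f \<noteq> e \<and> f \<inter> e \<noteq> {}}"

definition two_nbrs :: "('a \<Rightarrow> 'a \<Rightarrow> bool) \<Rightarrow> 'a set \<Rightarrow> 'a set set" where
  "two_nbrs E e = {f \<in> edges E. f \<noteq> e \<and> f \<inter> e = {} \<and>
      (\<exists>g \<in> edges E. g \<inter> e \<noteq> {} \<and> g \<inter> f \<noteq> {})}"

definition tri_nbrs :: "('a \<Rightarrow> 'a \<Rightarrow> bool) \<Rightarrow> 'a set \<Rightarrow> 'a set set" where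
  "tri_nbrs E e = {f \<in> one_nbrs E e. \<exists>a b c. e = {a, b} \<and> f = {b, c}
      \<and> a \<noteq> c \<and> E a c}"

definition joins :: "('a \<Rightarrow> 'a \<Rightarrow> bool) \<Rightarrow> 'a set \<Rightarrow> 'a set \<Rightarrow> ('a \<times> 'a) set" where
  "joins E e f = {(a, x). a \<in> e \<and> x \<in> f \<and> E a x}"

definition cnum :: "('a \<Rightarrow> 'a \<Rightarrow> bool) \<Rightarrow> 'a set \<Rightarrow> 'a set \<Rightarrow> nat" where
  "cnum E e f = card (joins E e f)"

definition T1 :: "('a \<Rightarrow> 'a \<Rightarrow> bool) \<Rightarrow> 'a set \<Rightarrow> 'a set set" where
  "T1 E e = {f \<in> two_nbrs E e. cnum E e f = 4}"

definition T2 :: "('a \<Rightarrow> 'a \<Rightarrow> bool) \<Rightarrow> 'a set \<Rightarrow> 'a set set" where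
  "T2 E e = {f \<in> two_nbrs E e. cnum E e f = 3}"

definition T3 :: "('a \<Rightarrow> 'a \<Rightarrow> bool) \<Rightarrow> 'a set \<Rightarrow> 'a set set" where
  "T3 E e = {f \<in> two_nbrs E e. cnum E e f = 2 \<and> (\<exists>x \<in> f. \<forall>a \<in> e. E x a)}"

definition T4 :: "('a \<Rightarrow> 'a \<Rightarrow> bool) \<Rightarrow> 'a set \<Rightarrow> 'a set set" where
  "T4 E e = {f \<in> two_nbrs E e. cnum E e f = 2 \<and>
      (\<forall>(a, x) \<in> joins E e f. \<forall>(b, y) \<in> joins E e f. (a, x) \<noteq> (b, y) \<longrightarrow> a \<noteq> b \<and> x \<noteq> y)}"

definition T5 :: "('a \<Rightarrow> 'a \<Rightarrow> bool) \<Rightarrow> 'a set \<Rightarrow> 'a set set" where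
  "T5 E e = {f \<in> two_nbrs E e. cnum E e f = 2 \<and> (\<exists>a \<in> e. \<forall>x \<in> f. E a x)}"

definition T6 :: "('a \<Rightarrow> 'a \<Rightarrow> bool) \<Rightarrow> 'a set \<Rightarrow> 'a set set" where
  "T6 E e = {f \<in> two_nbrs E e. cnum E e f = 1}"

definition Fset :: "('a \<Rightarrow> 'a \<Rightarrow> bool) \<Rightarrow> 'a set \<Rightarrow> 'a set set" where
  "Fset E e = one_nbrs E e \<union> T1 E e \<union> T2 E e \<union> T3 E e \<union> T4 E e \<union> T5 E e"

end

theory Submission
  imports Defs
begin

lemma sg_facts:
  assumes "simple_graph V E"
  shows "finite V" "E x y \<Longrightarrow> x \<in> V" "E x y \<Longrightarrow> y \<in> V" "E x y \<Longrightarrow> E y x" "\<not> E x x"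
  using assms unfolding simple_graph_def by blast+

lemma finite_nbhd: "simple_graph V E \<Longrightarrow> finite (nbhd E w)"
  using sg_facts[of V E] by (metis (no_types, lifting) finite_subset mem_Collect_eq nbhd_def subsetI)

lemma degree_le: assumes "simple_graph V E" shows "degree E w \<le> max_degree V E"
proof (cases "w \<in> V")
  case True
  then show ?thesis using sg_facts(1)[OF assms] unfolding max_degree_def by simp
next
  case False
  then have "nbhd E w = {}" using sg_facts(2)[OF assms] unfolding nbhd_def by blast
  then show ?thesis unfolding degree_def by simp
qed

lemma finite_edges: assumes "simple_graph V E" shows "finite (edges E)"
proof -
  have "edges E \<subseteq> Pow V" using sg_facts[OF assms] unfolding edges_def by blast
  then show ?thesis using sg_facts(1)[OF assms] by (meson finite_Pow_iff finite_subset)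
qed

lemma finite_joins: "finite f \<Longrightarrow> finite e \<Longrightarrow> finite (joins E e f)"
proof -
  assume "finite f" "finite e"
  moreover have "joins E e f \<subseteq> e \<times> f" unfolding joins_def by auto
  ultimately show ?thesis by (meson finite_SigmaI finite_subset)
qed

lemma sum_if_const: "finite A \<Longrightarrow> (\<Sum>x\<in>A. if P x then (k::nat) else 0) = k * card {x\<in>A. P x}"
  by (simp add: sum.inter_filter[symmetric])

lemma main_ineqs:
  assumes G: "simple_graph V E" and uv: "E u v"
  defines "e \<equiv> {u, v}"
  defines "P \<equiv> {(a,x). a \<in> e \<and> E a x \<and> x \<notin> e}"
  shows "card (Fset E e) \<le> card (one_nbrs E e) + card (T1 E e) + card (T2 E e) + card {f\<in>two_nbrs E e. cnum E e f = 2}"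
    and "card (one_nbrs E e) \<le> card P"
    and "card (tri_nbrs E e) + 4 * card (T1 E e) + 3 * card (T2 E e) + 2 * card {f\<in>two_nbrs E e. cnum E e f = 2}
          + card (T6 E e) \<le> (\<Sum>(a,x)\<in>P. degree E x - 1)"
    and "card P = (degree E u - 1) + (degree E v - 1)"
    and "finite P"
proof -
  note sg = sg_facts[OF G]
  have une: "u \<noteq> v" using sg(5) uv by metis
  have finP: "finite P"
  proof -
    have "P \<subseteq> e \<times> V" unfolding P_def using sg by auto
    then show ?thesis unfolding e_def using sg(1) by (meson finite.emptyI finite.insertI finite_SigmaI finite_subset)
  qed
  show "finite P" by (rule finP)
  have fin2: "finite (two_nbrs E e)"
    using finite_edges[OF G] unfolding two_nbrs_def by auto
  show "card (Fset E e) \<le> card (one_nbrs E e) + card (T1 E e) + card (T2 E e) + card {f\<in>two_nbrs E e. cnum E e f = 2}"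
  proof -
    have "Fset E e \<subseteq> one_nbrs E e \<union> T1 E e \<union> T2 E e \<union> {f\<in>two_nbrs E e. cnum E e f = 2}"
      unfolding Fset_def T3_def T4_def T5_def by auto
    moreover have "finite (one_nbrs E e \<union> T1 E e \<union> T2 E e \<union> {f\<in>two_nbrs E e. cnum E e f = 2})"
      using finite_edges[OF G] unfolding one_nbrs_def T1_def T2_def two_nbrs_def by auto
    ultimately have "card (Fset E e) \<le> card (one_nbrs E e \<union> T1 E e \<union> T2 E e \<union> {f\<in>two_nbrs E e. cnum E e f = 2})"
      by (rule card_mono[rotated])
    also have "\<dots> \<le> card (one_nbrs E e) + card (T1 E e) + card (T2 E e) + card {f\<in>two_nbrs E e. cnum E e f = 2}"
      by (meson add_le_mono card_Un_le le_refl order_trans)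
    finally show ?thesis .
  qed
  show "card (one_nbrs E e) \<le> card P"
  proof -
    have "one_nbrs E e \<subseteq> (\<lambda>(a,x). {a,x}) ` P"
    proof
      fix f assume f: "f \<in> one_nbrs E e"
      then obtain x y where fxy: "f = {x,y}" "E x y" "f \<noteq> e" "f \<inter> e \<noteq> {}"
        unfolding one_nbrs_def edges_def by auto
      show "f \<in> (\<lambda>(a,x). {a,x}) ` P"
      proof (cases "x \<in> e")
        case True
        then have "y \<notin> e" using fxy une sg(5) unfolding e_def by auto
        then have "(x,y) \<in> P" unfolding P_def using True fxy by auto
        moreover have "f = (\<lambda>(a,x). {a,x}) (x,y)" using fxy by simp
        ultimately show ?thesis by (rule rev_image_eqI)
      next
        case False
        then have "y \<in> e" using fxy by auto
        then have "(y,x) \<in> P" unfolding P_def using False fxy sg(4) by auto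
        moreover have "f = (\<lambda>(a,x). {a,x}) (y,x)" using fxy by (simp add: insert_commute)
        ultimately show ?thesis by (rule rev_image_eqI)
      qed
    qed
    then show ?thesis using finP by (meson card_image_le card_mono finite_imageI le_trans)
  qed
  show "card P = (degree E u - 1) + (degree E v - 1)"
  proof -
    have Peq: "P = ({u} \<times> (nbhd E u - {v})) \<union> ({v} \<times> (nbhd E v - {u}))"
      unfolding P_def e_def nbhd_def using sg(5) by auto
    have "card P = card ({u} \<times> (nbhd E u - {v})) + card ({v} \<times> (nbhd E v - {u}))"
      unfolding Peq using une finite_nbhd[OF G] by (intro card_Un_disjoint) auto
    also have "\<dots> = card (nbhd E u - {v}) + card (nbhd E v - {u})"
      by (simp add: card_cartesian_product_singleton)
    also have "\<dots> = (degree E u - 1) + (degree E v - 1)"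
      unfolding degree_def using finite_nbhd[OF G] uv sg(4)
      by (simp add: nbhd_def)
    finally show ?thesis .
  qed
  show "card (tri_nbrs E e) + 4 * card (T1 E e) + 3 * card (T2 E e) + 2 * card {f\<in>two_nbrs E e. cnum E e f = 2}
          + card (T6 E e) \<le> (\<Sum>(a,x)\<in>P. degree E x - 1)"
  proof -
    define Q where "Q = {(a,x)\<in>P. E u x \<and> E v x}"
    have QP: "Q \<subseteq> P" unfolding Q_def by auto
    have finQ: "finite Q" using finP QP by (rule finite_subset[rotated])
    have a: "card (tri_nbrs E e) \<le> card Q"
    proof -
      have "tri_nbrs E e \<subseteq> (\<lambda>(a,x). {a,x}) ` Q"
      proof
        fix f assume f: "f \<in> tri_nbrs E e"
        from f have f1: "f \<in> one_nbrs E e" "\<exists>a b c. e = {a, b} \<and> f = {b, c} \<and> a \<noteq> c \<and> E a c"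
          unfolding tri_nbrs_def by blast+
        from f1(1) have fE: "f \<in> edges E" unfolding one_nbrs_def by blast
        from f1(2) obtain a b c where abc: "e = {a,b}" "f = {b,c}" "a \<noteq> c" "E a c" "f \<in> edges E"
          using fE by blast
        then obtain x y where xy: "f = {x,y}" "E x y" unfolding edges_def by auto
        have Ebc: "E b c" using xy abc(2) sg(4) by (auto simp: doubleton_eq_iff)
        have "c \<noteq> b" using Ebc sg(5) by auto
        then have "c \<notin> e" using abc by auto
        moreover have "b \<in> e" using abc by auto
        moreover have "E u c \<and> E v c" using abc(1,4) Ebc une unfolding e_def
          by (auto simp: doubleton_eq_iff)
        ultimately have "(b,c) \<in> Q" unfolding Q_def P_def using Ebc by auto
        moreover have "f = (\<lambda>(a,x). {a,x}) (b,c)" using abc(2) by simp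
        ultimately show "f \<in> (\<lambda>(a,x). {a,x}) ` Q" by (rule rev_image_eqI)
      qed
      then show ?thesis using finQ by (meson card_image_le card_mono finite_imageI le_trans)
    qed
    have b: "4 * card (T1 E e) + 3 * card (T2 E e) + 2 * card {f\<in>two_nbrs E e. cnum E e f = 2}
          + card (T6 E e) \<le> (\<Sum>f\<in>two_nbrs E e. cnum E e f)"
    proof -
      have "(\<Sum>f\<in>two_nbrs E e. (if cnum E e f = 4 then 4 else 0) + (if cnum E e f = 3 then 3 else 0)
              + (if cnum E e f = 2 then 2 else 0) + (if cnum E e f = 1 then 1 else 0))
            \<le> (\<Sum>f\<in>two_nbrs E e. cnum E e f)"
        by (intro sum_mono) auto
      moreover have "(\<Sum>f\<in>two_nbrs E e. (if cnum E e f = 4 then 4 else 0) + (if cnum E e f = 3 then 3 else 0)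
              + (if cnum E e f = 2 then 2 else 0) + (if cnum E e f = (1::nat) then 1 else 0))
            = 4 * card (T1 E e) + 3 * card (T2 E e) + 2 * card {f\<in>two_nbrs E e. cnum E e f = 2}
          + card (T6 E e)"
        unfolding sum.distrib T1_def T2_def T6_def using sum_if_const[OF fin2] by simp
      ultimately show ?thesis by simp
    qed
    define J where "J = Sigma P (\<lambda>(a,x). nbhd E x - e)"
    have c1: "card J = (\<Sum>(a,x)\<in>P. card (nbhd E x - e))"
      unfolding J_def using finP finite_nbhd[OF G]
      by (subst card_SigmaI) (auto simp: case_prod_beta)
    have c2: "card J = (\<Sum>f\<in>two_nbrs E e. cnum E e f)"
    proof -
      have "bij_betw (\<lambda>((a,x),y). ({x,y},(a,x))) J (Sigma (two_nbrs E e) (joins E e))"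
        unfolding bij_betw_def
      proof
        show "inj_on (\<lambda>((a,x),y). ({x,y},(a,x))) J"
        proof (rule inj_onI)
          fix p q assume eq: "(\<lambda>((a,x),y). ({x,y},(a,x))) p = (\<lambda>((a,x),y). ({x,y},(a,x))) q"
          obtain a x y where p: "p = ((a,x),y)" by (metis prod.collapse)
          obtain a' x' y' where q: "q = ((a',x'),y')" by (metis prod.collapse)
          from eq have "{x,y} = {x',y'} \<and> a = a' \<and> x = x'" unfolding p q by (metis case_prod_conv prod.inject)
          then have "{x,y} = {x',y'}" "a = a'" "x = x'" by blast+
          then have "y = y'" by (auto simp: doubleton_eq_iff)
          then show "p = q" using p q \<open>a = a'\<close> \<open>x = x'\<close> by simp
        qed
        show "(\<lambda>((a,x),y). ({x,y},(a,x))) ` J = Sigma (two_nbrs E e) (joins E e)"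
        proof
          show "(\<lambda>((a,x),y). ({x,y},(a,x))) ` J \<subseteq> Sigma (two_nbrs E e) (joins E e)"
          proof -
          have key: "({x,y},(a,x)) \<in> Sigma (two_nbrs E e) (joins E e)" if "((a,x),y) \<in> J" for a x y
          proof -
            from that have h: "a \<in> e" "E a x" "x \<notin> e" "E x y" "y \<notin> e"
              unfolding J_def P_def nbhd_def by auto
            have "{x,y} \<in> edges E" using h unfolding edges_def by auto
            moreover have "{a,x} \<in> edges E" using h unfolding edges_def by auto
            moreover have "{x,y} \<noteq> e" using h by auto
            moreover have "{x,y} \<inter> e = {}" using h by auto
            moreover have "{a,x} \<inter> e \<noteq> {}" "{a,x} \<inter> {x,y} \<noteq> {}" using h by auto
            ultimately have "{x,y} \<in> two_nbrs E e" unfolding two_nbrs_def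
              by (simp only: mem_Collect_eq) (intro conjI bexI[of _ "{a,x}"]; simp)
            moreover have "(a,x) \<in> joins E e {x,y}" unfolding joins_def using h by auto
            ultimately show "({x,y},(a,x)) \<in> Sigma (two_nbrs E e) (joins E e)" by (rule SigmaI)
          qed
          show ?thesis
          proof (rule image_subsetI)
            fix q assume "q \<in> J"
            then show "(\<lambda>((a,x),y). ({x,y},(a,x))) q \<in> Sigma (two_nbrs E e) (joins E e)"
              using key by (cases q) auto
          qed
          qed
          show "Sigma (two_nbrs E e) (joins E e) \<subseteq> (\<lambda>((a,x),y). ({x,y},(a,x))) ` J"
          proof clarify
            fix f a x assume f: "f \<in> two_nbrs E e" and j: "(a,x) \<in> joins E e f"
            from f have fe: "f \<in> edges E" "f \<inter> e = {}" unfolding two_nbrs_def by blast+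
            from fe obtain x' y' where fxy: "f = {x',y'}" "E x' y'" "f \<inter> e = {}"
              unfolding edges_def by blast
            from j have j': "a \<in> e" "x \<in> f" "E a x" unfolding joins_def by auto
            obtain y where y: "f = {x,y}" "E x y"
            proof (cases "x = x'")
              case True then show ?thesis using that fxy by auto
            next
              case False then have "x = y'" using j' fxy by auto
              then show ?thesis using that fxy sg(4) by auto
            qed
            have "((a,x),y) \<in> J" unfolding J_def P_def nbhd_def using y j' fxy by auto
            moreover have "(f,(a,x)) = (\<lambda>((a,x),y). ({x,y},(a,x))) ((a,x),y)" using y by simp
            ultimately show "(f,(a,x)) \<in> (\<lambda>((a,x),y). ({x,y},(a,x))) ` J" by (rule rev_image_eqI)
          qed
        qed
      qed
      then have "card J = card (Sigma (two_nbrs E e) (joins E e))" by (rule bij_betw_same_card)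
      also have "\<dots> = (\<Sum>f\<in>two_nbrs E e. cnum E e f)"
        unfolding cnum_def
      proof (rule card_SigmaI[OF fin2], rule ballI)
        fix f assume "f \<in> two_nbrs E e"
        then have "f \<in> edges E" unfolding two_nbrs_def by blast
        then have "finite f" unfolding edges_def by auto
        then show "finite (joins E e f)" by (rule finite_joins) (simp add: e_def)
      qed
      finally show ?thesis .
    qed
    have pt: "card (nbhd E x - e) + (if E u x \<and> E v x then 1 else 0) \<le> degree E x - 1"
      if "(a,x) \<in> P" for a x
    proof -
      from that have ax: "a \<in> e" "E a x" "x \<notin> e" unfolding P_def by auto
      have fN: "finite (nbhd E x)" by (rule finite_nbhd[OF G])
      have dx: "degree E x = card (nbhd E x \<inter> e) + card (nbhd E x - e)"
        unfolding degree_def by (rule card_Int_Diff[OF fN])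
      have ain: "a \<in> nbhd E x \<inter> e" using ax sg(4) unfolding nbhd_def by auto
      have "1 + (if E u x \<and> E v x then 1 else 0) \<le> card (nbhd E x \<inter> e)"
      proof (cases "E u x \<and> E v x")
        case True
        then have "nbhd E x \<inter> e = {u,v}" unfolding nbhd_def e_def using sg(4) by auto
        then show ?thesis using True une by simp
      next
        case False
        have "finite (nbhd E x \<inter> e)" using fN by simp
        then have "card (nbhd E x \<inter> e) \<ge> 1" using ain
          by (metis One_nat_def Suc_leI card_gt_0_iff empty_iff)
        then show ?thesis using False by (simp only: if_False)
      qed
      then show ?thesis using dx by linarith
    qed
    have Qeq: "Q = {p\<in>P. E u (snd p) \<and> E v (snd p)}" unfolding Q_def by auto
    have d: "(\<Sum>(a,x)\<in>P. card (nbhd E x - e)) + card Q \<le> (\<Sum>(a,x)\<in>P. degree E x - 1)"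
    proof -
      have "card Q = (\<Sum>p\<in>P. if E u (snd p) \<and> E v (snd p) then 1 else 0)"
        unfolding Qeq using sum_if_const[OF finP, of "\<lambda>p. E u (snd p) \<and> E v (snd p)" 1] by simp
      then have "(\<Sum>(a,x)\<in>P. card (nbhd E x - e)) + card Q
           = (\<Sum>p\<in>P. card (nbhd E (snd p) - e) + (if E u (snd p) \<and> E v (snd p) then 1 else 0))"
        by (simp add: sum.distrib case_prod_beta)
      also have "\<dots> \<le> (\<Sum>p\<in>P. degree E (snd p) - 1)"
        by (rule sum_mono) (metis pt prod.collapse)
      finally show ?thesis by (simp add: case_prod_beta)
    qed
    show ?thesis using a b c1 c2 d by linarith
  qed
qed

theorem mainTheorem9:
  fixes V :: "'a set" and E :: "'a \<Rightarrow> 'a \<Rightarrow> bool" and u v :: 'a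
  assumes "simple_graph V E" and "E u v"
  defines "\<Delta> \<equiv> max_degree V E"
  shows "real (card (Fset E {u, v})) \<le>
           real \<Delta> ^ 2 - 1 - real (card (tri_nbrs E {u, v})) / 2 - real (card (T1 E {u, v}))
           - real (card (T2 E {u, v})) / 2 - real (card (T6 E {u, v})) / 2
       \<and> (real (card (Fset E {u, v})) =
           real \<Delta> ^ 2 - 1 - real (card (tri_nbrs E {u, v})) / 2 - real (card (T1 E {u, v}))
           - real (card (T2 E {u, v})) / 2 - real (card (T6 E {u, v})) / 2
         \<longrightarrow> (\<forall>w \<in> nbhd E u \<union> nbhd E v. degree E w = \<Delta>))"
proof -
  note sg = sg_facts[OF assms(1)]
  define e where "e = {u,v}"
  define P where "P = {(a,x). a \<in> e \<and> E a x \<and> x \<notin> e}"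
  note MI = main_ineqs[OF assms(1,2), folded e_def, folded P_def]
  define Fc where "Fc = card (Fset E {u, v})"
  define t where "t = card (tri_nbrs E {u, v})"
  define t1 where "t1 = card (T1 E {u, v})"
  define t2 where "t2 = card (T2 E {u, v})"
  define t6 where "t6 = card (T6 E {u, v})"
  define c2 where "c2 = card {f\<in>two_nbrs E e. cnum E e f = 2}"
  define n where "n = card (one_nbrs E e)"
  define p where "p = card P"
  define S where "S = (\<Sum>(a,x)\<in>P. degree E x - 1)"
  define du where "du = degree E u"
  define dv where "dv = degree E v"
  define D where "D = \<Delta> - 1"
  have h1: "Fc \<le> n + t1 + t2 + c2" using MI(1) unfolding Fc_def n_def t1_def t2_def c2_def e_def by simp
  have h2: "n \<le> p" using MI(2) unfolding n_def p_def .
  have h3: "t + 4*t1 + 3*t2 + 2*c2 + t6 \<le> S" using MI(3) unfolding t_def t1_def t2_def t6_def c2_def S_def e_def by simp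
  have h4: "p = (du - 1) + (dv - 1)" using MI(4) unfolding p_def du_def dv_def .
  have finP: "finite P" by (rule MI(5))
  have dle: "\<And>w. degree E w \<le> \<Delta>" unfolding \<Delta>_def by (rule degree_le[OF assms(1)])
  have du1: "du \<ge> 1"
  proof -
    have "v \<in> nbhd E u" using assms(2) unfolding nbhd_def by simp
    then show ?thesis unfolding du_def degree_def using finite_nbhd[OF assms(1)]
      by (metis One_nat_def Suc_leI card_gt_0_iff empty_iff)
  qed
  have dv1: "dv \<ge> 1"
  proof -
    have "u \<in> nbhd E v" using assms(2) sg(4) unfolding nbhd_def by simp
    then show ?thesis unfolding dv_def degree_def using finite_nbhd[OF assms(1)]
      by (metis One_nat_def Suc_leI card_gt_0_iff empty_iff)
  qed
  have duD: "du \<le> \<Delta>" "dv \<le> \<Delta>" unfolding du_def dv_def using dle by auto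
  have Dpos: "\<Delta> = D + 1" unfolding D_def using du1 duD by simp
  have dleD: "\<And>w. degree E w - 1 \<le> D" using dle Dpos by (metis add_diff_cancel_right' diff_le_mono)
  have pD: "p \<le> 2*D" using h4 duD du1 dv1 Dpos by simp
  have SD: "S \<le> p * D"
  proof -
    have "S \<le> of_nat (card P) * D" unfolding S_def
      by (rule sum_bounded_above) (use dleD in \<open>auto simp: case_prod_beta\<close>)
    then show ?thesis unfolding p_def by simp
  qed
  have pDD: "p * D \<le> 2*D*D" using pD by (simp add: mult_right_mono)
  define K where "K = 2*Fc + t + 2*t1 + t2 + t6"
  have Kle: "K \<le> 2*p + S" unfolding K_def using h1 h2 h3 by linarith
  have Kle2: "K \<le> 2*D*D + 4*D" using Kle SD pDD pD by linarith
  have KR: "real K \<le> real (2*D*D + 4*D)" using Kle2 by (simp only: of_nat_le_iff)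
  have RHS: "real \<Delta> ^ 2 - 1 - real t / 2 - real t1 - real t2 / 2 - real t6 / 2
      = (real (2*D*D + 4*D) - real K) / 2 + real Fc"
    unfolding K_def Dpos by (simp add: power2_eq_square field_simps)
  have main1: "real Fc \<le> real \<Delta> ^ 2 - 1 - real t / 2 - real t1 - real t2 / 2 - real t6 / 2"
    unfolding RHS using KR by simp
  have main2: "real K = real (2*D*D + 4*D)"
    if "real Fc = real \<Delta> ^ 2 - 1 - real t / 2 - real t1 - real t2 / 2 - real t6 / 2"
    using that unfolding RHS by simp
  show ?thesis
  proof
    show "real (card (Fset E {u, v})) \<le>
           real \<Delta> ^ 2 - 1 - real (card (tri_nbrs E {u, v})) / 2 - real (card (T1 E {u, v}))
           - real (card (T2 E {u, v})) / 2 - real (card (T6 E {u, v})) / 2"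
      using main1 unfolding Fc_def t_def t1_def t2_def t6_def .
  next
    show "real (card (Fset E {u, v})) =
           real \<Delta> ^ 2 - 1 - real (card (tri_nbrs E {u, v})) / 2 - real (card (T1 E {u, v}))
           - real (card (T2 E {u, v})) / 2 - real (card (T6 E {u, v})) / 2
         \<longrightarrow> (\<forall>w \<in> nbhd E u \<union> nbhd E v. degree E w = \<Delta>)"
    proof
      assume "real (card (Fset E {u, v})) =
           real \<Delta> ^ 2 - 1 - real (card (tri_nbrs E {u, v})) / 2 - real (card (T1 E {u, v}))
           - real (card (T2 E {u, v})) / 2 - real (card (T6 E {u, v})) / 2"
      then have "real K = real (2*D*D + 4*D)" using main2 unfolding Fc_def t_def t1_def t2_def t6_def
        by blast
      then have Keq: "K = 2*D*D + 4*D" by (simp only: of_nat_eq_iff)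
      have p2D: "p = 2*D"
      proof (rule ccontr)
        assume "p \<noteq> 2*D"
        then have "p < 2*D" using pD by simp
        then show False using Keq Kle SD pDD by linarith
      qed
      have SpD: "S = p*D" using Keq Kle SD pDD p2D by linarith
      have dudv: "du = \<Delta>" "dv = \<Delta>" using p2D h4 duD du1 dv1 Dpos by auto
      have allx: "degree E x = \<Delta>" if "(a,x) \<in> P" for a x
      proof (rule ccontr)
        assume ne: "degree E x \<noteq> \<Delta>"
        from that have ax: "E a x" unfolding P_def by auto
        then have "a \<in> nbhd E x" using sg(4) unfolding nbhd_def by auto
        then have "degree E x \<ge> 1" unfolding degree_def using finite_nbhd[OF assms(1)]
          by (metis One_nat_def Suc_leI card_gt_0_iff empty_iff)
        moreover have "degree E x < \<Delta>" using ne dle[of x] by simp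
        ultimately have lt: "degree E x - 1 < D" using Dpos by simp
        have "S < (\<Sum>q\<in>P. D)" unfolding S_def
        proof (rule sum_strict_mono_ex1[OF finP])
          show "\<forall>q\<in>P. (case q of (a, x) \<Rightarrow> degree E x - 1) \<le> D"
            using dleD by (auto simp: case_prod_beta)
          show "\<exists>q\<in>P. (case q of (a, x) \<Rightarrow> degree E x - 1) < D"
            using that lt by force
        qed
        then show False using SpD unfolding p_def by simp
      qed
      show "\<forall>w \<in> nbhd E u \<union> nbhd E v. degree E w = \<Delta>"
      proof
        fix w assume w: "w \<in> nbhd E u \<union> nbhd E v"
        show "degree E w = \<Delta>"
        proof (cases "w \<in> e")
          case True
          then show ?thesis using dudv unfolding e_def du_def dv_def by auto
        next
          case False
          then have "(u,w) \<in> P \<or> (v,w) \<in> P" using w unfolding P_def nbhd_def e_def by auto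
          then show ?thesis using allx by blast
        qed
      qed
    qed
  qed
qed


end
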